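(* Let $G_1=(V,D_1)$ and $G_2=(V,D_2)$ be two simple directed graphs on the same node set $V$. If at least one of $G_1,G_2$ is not complete and there exists a node $i\in V$ such that $|\mathrm{ch}_1(i)|\neq|\mathrm{ch}_2(i)|$, then $G_1$ and $G_2$ have different Jacobian matroids.
   Context: A directed graph $G=(V,D)$ has a finite node set $V$ and edge set $D\subseteq V\times V$ of ordered pairs $(i,j)$, $i\neq j$, written $i\to j$. It is simple if $(i,j)$ and $(j,i)$ are never both in $D$. It is complete if every pair of distinct nodes is adjacent, i.e. joined by an edge in some direction. $\mathrm{ch}_k(i)=\{j:(i,j)\in D_k\}$ is the set of children of $i$ in $G_k$. For $G=(V,D)$ let $\Lambda=(\lambda_{ij})$ be the $V\times V$ matrix with indeterminate entries $\lambda_{ij}$ for $(i,j)\in D$ and zeros elsewhere, and let $s$ be a further indeterminate. The precision parameterization is $\psi_G(\Lambda,s)=s(I-\Lambda)(I-\Lambda)^T=K=(K_{ij})$. The (transposed) Jacobian $J=J(\psi_G)$ has one row for each parameter $\lambda_{kl}$, $(k,l)\in D$, and one row for $s$. It has one column for each entry $K_{ij}$ with $i\le j$ (equivalently, for each unordered pair $\{i,j\}$, including $i=j$). The entry in row $\theta$, column $K_{ij}$ is $\partial K_{ij}/\partial\theta$. The Jacobian matroid of $G$ is the matroid on this set of columns in which a set of columns is independent iff the columns are linearly independent over the field $\mathbb{R}(\lambda,s)$ of rational functions in the parameters. *)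

theory Defs
  imports "HOL-Analysis.Analysis"
begin

definition digraph :: "'v set \<Rightarrow> ('v \<times> 'v) set \<Rightarrow> bool" where
  "digraph V D \<longleftrightarrow> finite V \<and> D \<subseteq> V \<times> V \<and> (\<forall>i. (i, i) \<notin> D)"

definition simple_digraph :: "'v set \<Rightarrow> ('v \<times> 'v) set \<Rightarrow> bool" where
  "simple_digraph V D \<longleftrightarrow> digraph V D \<and> (\<forall>i j. (i, j) \<in> D \<longrightarrow> (j, i) \<notin> D)"

definition complete_digraph :: "'v set \<Rightarrow> ('v \<times> 'v) set \<Rightarrow> bool" where
  "complete_digraph V D \<longleftrightarrow>
     (\<forall>i\<in>V. \<forall>j\<in>V. i \<noteq> j \<longrightarrow> (i, j) \<in> D \<or> (j, i) \<in> D)"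

definition ch :: "('v \<times> 'v) set \<Rightarrow> 'v \<Rightarrow> 'v set" where
  "ch D i = {j. (i, j) \<in> D}"

text \<open>Parameters are coordinates of a point x :: ('v \<times> 'v) option \<Rightarrow> real:
  Some (k,l) is lambda_kl (for (k,l) in D), None is s.\<close>

type_synonym 'v param = "('v \<times> 'v) option"

definition params :: "('v \<times> 'v) set \<Rightarrow> 'v param set" where
  "params D = Some ` D \<union> {None}"

definition Lam :: "('v \<times> 'v) set \<Rightarrow> ('v param \<Rightarrow> real) \<Rightarrow> 'v \<Rightarrow> 'v \<Rightarrow> real" where
  "Lam D x i j = (if (i, j) \<in> D then x (Some (i, j)) else 0)"

text \<open>K = s (I - Lambda)(I - Lambda)^T, entrywise.\<close>
definition Kmat :: "'v set \<Rightarrow> ('v \<times> 'v) set \<Rightarrow> ('v param \<Rightarrow> real) \<Rightarrow> 'v \<Rightarrow> 'v \<Rightarrow> real" where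
  "Kmat V D x i j = x None *
     (\<Sum>k\<in>V. ((if i = k then 1 else 0) - Lam D x i k) * ((if j = k then 1 else 0) - Lam D x j k))"

text \<open>Columns of J: the entries K_ij with i \<le> j.\<close>
definition cols :: "'v::linorder set \<Rightarrow> ('v \<times> 'v) set" where
  "cols V = {(i, j). i \<in> V \<and> j \<in> V \<and> i \<le> j}"

definition jac :: "'v set \<Rightarrow> ('v \<times> 'v) set \<Rightarrow> 'v param \<Rightarrow> 'v \<times> 'v \<Rightarrow> ('v param \<Rightarrow> real) \<Rightarrow> real" where
  "jac V D \<theta> c x = deriv (\<lambda>t. Kmat V D (x(\<theta> := t)) (fst c) (snd c)) (x \<theta>)"

text \<open>The real polynomial ring R[lambda, s] in the parameter indeterminates, realised as
  polynomial functions (faithful since R is infinite).\<close>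
inductive_set polyfun :: "'p set \<Rightarrow> (('p \<Rightarrow> real) \<Rightarrow> real) set" for P :: "'p set" where
  const: "(\<lambda>x. c) \<in> polyfun P"
| var: "\<theta> \<in> P \<Longrightarrow> (\<lambda>x. x \<theta>) \<in> polyfun P"
| add: "f \<in> polyfun P \<Longrightarrow> g \<in> polyfun P \<Longrightarrow> (\<lambda>x. f x + g x) \<in> polyfun P"
| mult: "f \<in> polyfun P \<Longrightarrow> g \<in> polyfun P \<Longrightarrow> (\<lambda>x. f x * g x) \<in> polyfun P"

text \<open>A set C of columns is linearly independent over R(lambda,s) iff there is no
  nontrivial linear relation with coefficients in R(lambda,s); after clearing
  denominators, iff there is no relation with polynomial coefficients not all zero.\<close>
definition jac_indep :: "'v set \<Rightarrow> ('v \<times> 'v) set \<Rightarrow> ('v \<times> 'v) set \<Rightarrow> bool" where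
  "jac_indep V D C \<longleftrightarrow>
     \<not> (\<exists>p :: 'v \<times> 'v \<Rightarrow> ('v param \<Rightarrow> real) \<Rightarrow> real.
          (\<forall>c\<in>C. p c \<in> polyfun (params D)) \<and>
          (\<exists>c\<in>C. \<exists>x. p c x \<noteq> 0) \<and>
          (\<forall>\<theta>\<in>params D. \<forall>x. (\<Sum>c\<in>C. p c x * jac V D \<theta> c x) = 0))"

definition jacobian_matroid :: "'v::linorder set \<Rightarrow> ('v \<times> 'v) set \<Rightarrow> ('v \<times> 'v) set set" where
  "jacobian_matroid V D = {C. C \<subseteq> cols V \<and> jac_indep V D C}"

end

theory Submission
  imports Defs "HOL-Computational_Algebra.Polynomial"
begin

lemma polyfun_diff:
  assumes "f \<in> polyfun P" "g \<in> polyfun P"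
  shows "(\<lambda>x. f x - g x) \<in> polyfun P"
proof -
  have "(\<lambda>x. f x + (\<lambda>x. -1) x * g x) \<in> polyfun P"
    by (intro polyfun.add polyfun.mult polyfun.const assms)
  thus ?thesis by simp
qed

lemma polyfun_sum:
  assumes "finite A" "\<And>a. a \<in> A \<Longrightarrow> f a \<in> polyfun P"
  shows "(\<lambda>x. \<Sum>a\<in>A. f a x) \<in> polyfun P"
  using assms
proof (induction A rule: finite_induct)
  case empty
  then show ?case using polyfun.const[of 0] by simp
next
  case (insert a A)
  have "(\<lambda>x. f a x + (\<lambda>x. \<Sum>a\<in>A. f a x) x) \<in> polyfun P"
    using insert by (intro polyfun.add) auto
  then show ?case using insert by simp
qed

lemma polyfun_line:
  assumes "f \<in> polyfun P"
  shows "\<exists>q. \<forall>t. f (\<lambda>\<theta>. x0 \<theta> + t * (y \<theta> - x0 \<theta>)) = poly q t"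
  using assms
proof (induction rule: polyfun.induct)
  case (const c)
  then show ?case by (intro exI[of _ "[:c:]"]) simp
next
  case (var \<theta>)
  then show ?case by (intro exI[of _ "[:x0 \<theta>, y \<theta> - x0 \<theta>:]"]) (simp add: algebra_simps)
next
  case (add f g)
  then obtain q1 q2 where "\<forall>t. f (\<lambda>\<theta>. x0 \<theta> + t * (y \<theta> - x0 \<theta>)) = poly q1 t"
     "\<forall>t. g (\<lambda>\<theta>. x0 \<theta> + t * (y \<theta> - x0 \<theta>)) = poly q2 t" by blast
  then show ?case by (intro exI[of _ "q1 + q2"]) simp
next
  case (mult f g)
  then obtain q1 q2 where "\<forall>t. f (\<lambda>\<theta>. x0 \<theta> + t * (y \<theta> - x0 \<theta>)) = poly q1 t"
     "\<forall>t. g (\<lambda>\<theta>. x0 \<theta> + t * (y \<theta> - x0 \<theta>)) = poly q2 t" by blast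
  then show ?case by (intro exI[of _ "q1 * q2"]) simp
qed

lemma polyfun_domain:
  assumes f: "f \<in> polyfun P" and g: "g \<in> polyfun P"
    and z: "\<And>x. f x * g x = 0" and g0: "g x0 \<noteq> 0"
  shows "f y = 0"
proof -
  obtain qf where qf: "\<forall>t. f (\<lambda>\<theta>. x0 \<theta> + t * (y \<theta> - x0 \<theta>)) = poly qf t"
    using polyfun_line[OF f] by blast
  obtain qg where qg: "\<forall>t. g (\<lambda>\<theta>. x0 \<theta> + t * (y \<theta> - x0 \<theta>)) = poly qg t"
    using polyfun_line[OF g] by blast
  have "\<forall>t. poly (qf * qg) t = 0" using qf qg z by (metis poly_mult)
  hence "qf * qg = 0" using poly_all_0_iff_0 by blast
  moreover have "qg \<noteq> 0"
  proof
    assume "qg = 0"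
    moreover have "g x0 = poly qg 0" using qg[rule_format, of 0] by simp
    ultimately show False using g0 by simp
  qed
  ultimately have "qf = 0" by simp
  moreover have "f y = poly qf 1" using qf[rule_format, of 1] by simp
  ultimately show ?thesis by simp
qed


lemma dep_exists:
  fixes v :: "'r \<Rightarrow> 'c \<Rightarrow> ('p \<Rightarrow> real) \<Rightarrow> real"
  assumes "finite R" "finite C" "card R < card C"
    "\<And>\<rho> c. \<rho> \<in> R \<Longrightarrow> c \<in> C \<Longrightarrow> v \<rho> c \<in> polyfun P"
  shows "\<exists>p. (\<forall>c\<in>C. p c \<in> polyfun P) \<and> (\<exists>c\<in>C. \<exists>x. p c x \<noteq> 0) \<and>
             (\<forall>\<rho>\<in>R. \<forall>x. (\<Sum>c\<in>C. p c x * v \<rho> c x) = 0)"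
  using assms
proof (induction R arbitrary: C v rule: finite_induct)
  case empty
  then obtain c where "c \<in> C" by fastforce
  then show ?case by (intro exI[of _ "\<lambda>c x. 1"]) (auto intro: polyfun.const)
next
  case (insert \<rho>0 R)
  show ?case
  proof (cases "\<forall>c\<in>C. \<forall>x. v \<rho>0 c x = 0")
    case True
    have "card R < card C" using insert by simp
    then obtain p where p: "\<forall>c\<in>C. p c \<in> polyfun P" "\<exists>c\<in>C. \<exists>x. p c x \<noteq> 0"
      "\<forall>\<rho>\<in>R. \<forall>x. (\<Sum>c\<in>C. p c x * v \<rho> c x) = 0"
      using insert.IH[of C v] insert.prems by auto
    show ?thesis using p True by (intro exI[of _ p]) auto
  next
    case False
    then obtain c0 x0 where c0: "c0 \<in> C" and x0: "v \<rho>0 c0 x0 \<noteq> 0" by blast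
    define C' where "C' = C - {c0}"
    define w where "w = (\<lambda>\<rho> c x. v \<rho>0 c0 x * v \<rho> c x - v \<rho>0 c x * v \<rho> c0 x)"
    have fC': "finite C'" using insert.prems C'_def by simp
    have cC': "card R < card C'" using insert c0 C'_def by (simp add: card_Diff_singleton)
    have pw: "w \<rho> c \<in> polyfun P" if "\<rho> \<in> R" "c \<in> C'" for \<rho> c
      unfolding w_def using that insert.prems C'_def c0
      by (intro polyfun_diff polyfun.mult) auto
    obtain q where q: "\<forall>c\<in>C'. q c \<in> polyfun P" "\<exists>c\<in>C'. \<exists>x. q c x \<noteq> 0"
      "\<forall>\<rho>\<in>R. \<forall>x. (\<Sum>c\<in>C'. q c x * w \<rho> c x) = 0"
      using insert.IH[of C' w, OF fC' cC' pw] by blast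
    define p where "p = (\<lambda>c. if c = c0 then (\<lambda>x. - (\<Sum>c\<in>C'. q c x * v \<rho>0 c x))
                           else (\<lambda>x. q c x * v \<rho>0 c0 x))"
    have pc0: "v \<rho>0 c0 \<in> polyfun P" using insert.prems c0 by auto
    have "\<forall>c\<in>C. p c \<in> polyfun P"
    proof
      fix c assume c: "c \<in> C"
      show "p c \<in> polyfun P"
      proof (cases "c = c0")
        case True
        have "(\<lambda>x. (\<lambda>x. -1) x * (\<lambda>x. \<Sum>c\<in>C'. q c x * v \<rho>0 c x) x) \<in> polyfun P"
          using q(1) insert.prems fC' C'_def
          by (intro polyfun.mult polyfun.const polyfun_sum) auto
        then show ?thesis using True p_def by simp
      next
        case False
        then show ?thesis using p_def q(1) c C'_def pc0 by (auto intro: polyfun.mult)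
      qed
    qed
    moreover have "\<exists>c\<in>C. \<exists>x. p c x \<noteq> 0"
    proof -
      obtain c x1 where c: "c \<in> C'" "q c x1 \<noteq> 0" using q(2) by blast
      have "\<exists>x. q c x * v \<rho>0 c0 x \<noteq> 0"
      proof (rule ccontr)
        assume "\<not> ?thesis"
        hence "q c x1 = 0" using polyfun_domain[OF _ pc0, of "q c" x0 x1] q(1) c x0 by auto
        thus False using c by simp
      qed
      thus ?thesis using c C'_def p_def by auto
    qed
    moreover have "\<forall>\<rho>\<in>insert \<rho>0 R. \<forall>x. (\<Sum>c\<in>C. p c x * v \<rho> c x) = 0"
    proof (intro ballI allI)
      fix \<rho> x assume \<rho>: "\<rho> \<in> insert \<rho>0 R"
      have "(\<Sum>c\<in>C. p c x * v \<rho> c x) = p c0 x * v \<rho> c0 x + (\<Sum>c\<in>C'. p c x * v \<rho> c x)"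
        using c0 insert.prems C'_def by (simp add: sum.remove)
      also have "(\<Sum>c\<in>C'. p c x * v \<rho> c x) = (\<Sum>c\<in>C'. q c x * v \<rho>0 c0 x * v \<rho> c x)"
        using C'_def p_def by (intro sum.cong) auto
      also have "p c0 x * v \<rho> c0 x = - (\<Sum>c\<in>C'. q c x * v \<rho>0 c x * v \<rho> c0 x)"
        using p_def by (simp add: sum_distrib_right)
      finally have e: "(\<Sum>c\<in>C. p c x * v \<rho> c x) = (\<Sum>c\<in>C'. q c x * w \<rho> c x)"
        unfolding w_def by (simp add: algebra_simps sum_subtractf)
      show "(\<Sum>c\<in>C. p c x * v \<rho> c x) = 0"
      proof (cases "\<rho> = \<rho>0")
        case True
        then show ?thesis using e w_def by simp
      next
        case False
        then show ?thesis using e q(3) \<rho> by auto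
      qed
    qed
    ultimately show ?thesis by blast
  qed
qed

lemma indep_from_point:
  fixes v :: "'r \<Rightarrow> 'c \<Rightarrow> ('p \<Rightarrow> real) \<Rightarrow> real"
  assumes "finite C"
    "\<And>\<rho> c. \<rho> \<in> R \<Longrightarrow> c \<in> C \<Longrightarrow> v \<rho> c \<in> polyfun P"
    "\<And>a. (\<forall>\<rho>\<in>R. (\<Sum>c\<in>C. a c * v \<rho> c x0) = 0) \<Longrightarrow> \<forall>c\<in>C. a c = 0"
    "\<forall>c\<in>C. p c \<in> polyfun P"
    "\<forall>\<rho>\<in>R. \<forall>x. (\<Sum>c\<in>C. p c x * v \<rho> c x) = 0"
  shows "\<forall>c\<in>C. \<forall>x. p c x = 0"
  using assms
proof (induction C arbitrary: v rule: finite_induct)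
  case empty
  then show ?case by simp
next
  case (insert c0 C)
  have "\<exists>\<rho>\<in>R. v \<rho> c0 x0 \<noteq> 0"
  proof (rule ccontr)
    assume "\<not> ?thesis"
    hence "\<forall>\<rho>\<in>R. (\<Sum>c\<in>insert c0 C. (if c = c0 then 1 else 0) * v \<rho> c x0) = 0"
      using insert.hyps by (auto intro!: sum.neutral)
    hence "\<forall>c\<in>insert c0 C. (if c = c0 then 1 else (0::real)) = 0"
      using insert.prems(2)[of "\<lambda>c. if c = c0 then 1 else 0"] by blast
    thus False by simp
  qed
  then obtain \<rho>0 where \<rho>0: "\<rho>0 \<in> R" "v \<rho>0 c0 x0 \<noteq> 0" by blast
  define w where "w = (\<lambda>\<rho> c x. v \<rho>0 c0 x * v \<rho> c x - v \<rho>0 c x * v \<rho> c0 x)"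
  have pw: "w \<rho> c \<in> polyfun P" if "\<rho> \<in> R" "c \<in> C" for \<rho> c
    unfolding w_def using that insert.prems \<rho>0
    by (intro polyfun_diff polyfun.mult) auto
  have iw: "\<forall>c\<in>C. a c = 0" if a: "\<forall>\<rho>\<in>R. (\<Sum>c\<in>C. a c * w \<rho> c x0) = 0" for a
  proof -
    define b where "b = (\<lambda>c. if c = c0 then - (\<Sum>c\<in>C. a c * v \<rho>0 c x0) else a c * v \<rho>0 c0 x0)"
    have "\<forall>\<rho>\<in>R. (\<Sum>c\<in>insert c0 C. b c * v \<rho> c x0) = 0"
    proof
      fix \<rho> assume "\<rho> \<in> R"
      have "(\<Sum>c\<in>insert c0 C. b c * v \<rho> c x0) = b c0 * v \<rho> c0 x0 + (\<Sum>c\<in>C. b c * v \<rho> c x0)"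
        using insert.hyps by simp
      also have "(\<Sum>c\<in>C. b c * v \<rho> c x0) = (\<Sum>c\<in>C. a c * v \<rho>0 c0 x0 * v \<rho> c x0)"
        using insert.hyps b_def by (intro sum.cong) auto
      also have "b c0 = - (\<Sum>c\<in>C. a c * v \<rho>0 c x0)" using b_def by simp
      also have "(\<Sum>c\<in>C. a c * w \<rho> c x0) = (\<Sum>c\<in>C. a c * v \<rho>0 c0 x0 * v \<rho> c x0)
          - (\<Sum>c\<in>C. a c * v \<rho>0 c x0) * v \<rho> c0 x0"
        unfolding w_def by (simp add: algebra_simps sum_subtractf sum_distrib_right sum_distrib_left)
      ultimately have "(\<Sum>c\<in>insert c0 C. b c * v \<rho> c x0) = (\<Sum>c\<in>C. a c * w \<rho> c x0)"
        by simp
      thus "(\<Sum>c\<in>insert c0 C. b c * v \<rho> c x0) = 0" using a \<open>\<rho> \<in> R\<close> by simp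
    qed
    hence "\<forall>c\<in>insert c0 C. b c = 0" using insert.prems(2)[of b] by blast
    thus ?thesis using b_def \<rho>0 insert.hyps by auto (metis mult_eq_0_iff)
  qed
  have rel: "\<forall>\<rho>\<in>R. \<forall>x. (\<Sum>c\<in>C. p c x * w \<rho> c x) = 0"
  proof (intro ballI allI)
    fix \<rho> x assume "\<rho> \<in> R"
    have r1: "p c0 x * v \<rho> c0 x + (\<Sum>c\<in>C. p c x * v \<rho> c x) = 0"
      using insert.prems(4) \<open>\<rho> \<in> R\<close> insert.hyps by auto
    have r0: "p c0 x * v \<rho>0 c0 x + (\<Sum>c\<in>C. p c x * v \<rho>0 c x) = 0"
      using insert.prems(4) \<rho>0 insert.hyps by auto
    have "(\<Sum>c\<in>C. p c x * w \<rho> c x) = v \<rho>0 c0 x * (\<Sum>c\<in>C. p c x * v \<rho> c x)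
          - (\<Sum>c\<in>C. p c x * v \<rho>0 c x) * v \<rho> c0 x"
      unfolding w_def by (simp add: algebra_simps sum_subtractf sum_distrib_left sum_distrib_right)
    also have "\<dots> = v \<rho>0 c0 x * (- p c0 x * v \<rho> c0 x) - (- p c0 x * v \<rho>0 c0 x) * v \<rho> c0 x"
    proof -
      have e1: "(\<Sum>c\<in>C. p c x * v \<rho> c x) = - (p c0 x * v \<rho> c0 x)" using r1 by linarith
      have e0: "(\<Sum>c\<in>C. p c x * v \<rho>0 c x) = - (p c0 x * v \<rho>0 c0 x)" using r0 by linarith
      show ?thesis by (simp only: e1 e0) simp
    qed
    finally show "(\<Sum>c\<in>C. p c x * w \<rho> c x) = 0" by simp
  qed
  have z: "\<forall>c\<in>C. \<forall>x. p c x = 0"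
    using insert.IH[of w, OF pw iw] insert.prems(3) rel by auto
  have "\<forall>x. p c0 x * v \<rho>0 c0 x = 0"
  proof
    fix x
    have "p c0 x * v \<rho>0 c0 x + (\<Sum>c\<in>C. p c x * v \<rho>0 c x) = 0"
      using insert.prems(4) \<rho>0 insert.hyps by auto
    thus "p c0 x * v \<rho>0 c0 x = 0" using z by simp
  qed
  hence "\<forall>x. p c0 x = 0"
    using polyfun_domain[of "p c0" P "v \<rho>0 c0" x0] insert.prems \<rho>0 by auto
  thus ?case using z by auto
qed


definition A :: "('v \<times> 'v) set \<Rightarrow> ('v param \<Rightarrow> real) \<Rightarrow> 'v \<Rightarrow> 'v \<Rightarrow> real" where
  "A D x i k = (if i = k then 1 else 0) - Lam D x i k"

definition dL :: "('v \<times> 'v) set \<Rightarrow> 'v param \<Rightarrow> 'v \<Rightarrow> 'v \<Rightarrow> real" where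
  "dL D \<theta> i k = (if (i, k) \<in> D \<and> \<theta> = Some (i, k) then 1 else 0)"

definition jf :: "'v set \<Rightarrow> ('v \<times> 'v) set \<Rightarrow> 'v param \<Rightarrow> 'v \<Rightarrow> 'v \<Rightarrow> ('v param \<Rightarrow> real) \<Rightarrow> real" where
  "jf V D \<theta> i j x = (if \<theta> = None then 1 else 0) * (\<Sum>k\<in>V. A D x i k * A D x j k)
     + x None * (\<Sum>k\<in>V. - dL D \<theta> i k * A D x j k - A D x i k * dL D \<theta> j k)"

lemma upd_deriv:
  "((\<lambda>t. (x(\<theta>:=t)) \<phi>) has_real_derivative (if \<phi> = \<theta> then 1 else 0)) (at t0)"
  by (cases "\<phi> = \<theta>") (auto intro!: derivative_eq_intros)

lemma Lam_deriv:
  "((\<lambda>t. Lam D (x(\<theta>:=t)) i k) has_real_derivative dL D \<theta> i k) (at t0)"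
proof (cases "(i, k) \<in> D")
  case True
  then show ?thesis unfolding Lam_def dL_def using upd_deriv[of x \<theta> "Some (i,k)" t0]
    by (auto simp: eq_commute)
next
  case False
  then show ?thesis unfolding Lam_def dL_def by simp
qed

lemma A_deriv:
  "((\<lambda>t. A D (x(\<theta>:=t)) i k) has_real_derivative - dL D \<theta> i k) (at t0)"
  unfolding A_def using Lam_deriv[of D x \<theta> i k t0]
  by (auto intro!: derivative_eq_intros)

lemma Kmat_deriv:
  "((\<lambda>t. Kmat V D (x(\<theta>:=t)) i j) has_real_derivative jf V D \<theta> i j (x(\<theta>:=t0))) (at t0)"
proof -
  have K: "(\<lambda>t. Kmat V D (x(\<theta>:=t)) i j) =
       (\<lambda>t. (x(\<theta>:=t)) None * (\<Sum>k\<in>V. A D (x(\<theta>:=t)) i k * A D (x(\<theta>:=t)) j k))"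
    unfolding Kmat_def A_def by simp
  have "((\<lambda>t. (x(\<theta>:=t)) None * (\<Sum>k\<in>V. A D (x(\<theta>:=t)) i k * A D (x(\<theta>:=t)) j k))
     has_real_derivative
       (x(\<theta>:=t0)) None * (\<Sum>k\<in>V. A D (x(\<theta>:=t0)) i k * - dL D \<theta> j k
          + - dL D \<theta> i k * A D (x(\<theta>:=t0)) j k)
       + (if None = \<theta> then 1 else 0) * (\<Sum>k\<in>V. A D (x(\<theta>:=t0)) i k * A D (x(\<theta>:=t0)) j k)) (at t0)"
    by (intro DERIV_mult' DERIV_sum upd_deriv A_deriv)
  then show ?thesis unfolding K jf_def by (simp add: eq_commute[of None] algebra_simps)
qed

lemma jac_eq: "jac V D \<theta> c x = jf V D \<theta> (fst c) (snd c) x"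
proof -
  have "deriv (\<lambda>t. Kmat V D (x(\<theta> := t)) (fst c) (snd c)) (x \<theta>)
        = jf V D \<theta> (fst c) (snd c) (x(\<theta> := x \<theta>))"
    by (rule DERIV_imp_deriv[OF Kmat_deriv])
  thus ?thesis unfolding jac_def by simp
qed

lemma jac_None: "jac V D None c x = (\<Sum>k\<in>V. A D x (fst c) k * A D x (snd c) k)"
  unfolding jac_eq jf_def dL_def by simp

lemma sum_ind:
  assumes "finite V" "b \<in> V"
  shows "(\<Sum>k\<in>V. (if i = a \<and> k = b then 1 else 0) * f k) = (if i = a then f b else (0::real))"
proof -
  have "(\<Sum>k\<in>V. (if i = a \<and> k = b then 1 else 0) * f k)
      = (\<Sum>k\<in>V. if k = b then (if i = a then f k else 0) else 0)"
    by (rule sum.cong) auto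
  also have "\<dots> = (if i = a then f b else 0)" using assms by (simp add: sum.delta)
  finally show ?thesis .
qed

lemma jac_Some:
  assumes "finite V" "(a, b) \<in> D" "b \<in> V"
  shows "jac V D (Some (a, b)) c x = - x None * ((if fst c = a then A D x (snd c) b else 0)
                                        + (if snd c = a then A D x (fst c) b else 0))"
proof -
  have d: "dL D (Some (a, b)) i k = (if i = a \<and> k = b then 1 else 0)" for i k
    unfolding dL_def using assms by auto
  have "(\<Sum>k\<in>V. - dL D (Some (a, b)) (fst c) k * A D x (snd c) k - A D x (fst c) k * dL D (Some (a, b)) (snd c) k)
     = - (\<Sum>k\<in>V. (if fst c = a \<and> k = b then 1 else 0) * A D x (snd c) k)
       - (\<Sum>k\<in>V. (if snd c = a \<and> k = b then 1 else 0) * A D x (fst c) k)"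
    unfolding d by (simp add: sum_subtractf sum_negf mult.commute)
  also have "\<dots> = - ((if fst c = a then A D x (snd c) b else 0) + (if snd c = a then A D x (fst c) b else 0))"
    by (simp only: sum_ind[OF assms(1,3)])
  finally show ?thesis unfolding jac_eq jf_def by simp
qed

lemma polyfun_A: "(\<lambda>x. A D x i k) \<in> polyfun (params D)"
proof (cases "(i, k) \<in> D")
  case True
  have "(\<lambda>x. (\<lambda>x. if i = k then 1 else 0) x - (\<lambda>x. x (Some (i, k))) x) \<in> polyfun (params D)"
    using True by (intro polyfun_diff polyfun.const polyfun.var) (auto simp: params_def)
  then show ?thesis using True unfolding A_def Lam_def by simp
next
  case False
  have "(\<lambda>x. A D x i k) = (\<lambda>x. if i = k then 1 else 0)" using False unfolding A_def Lam_def by simp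
  then show ?thesis using polyfun.const[of "if i = k then 1 else 0" "params D"] by simp
qed

lemma polyfun_jac:
  assumes "finite V"
  shows "jac V D \<theta> c \<in> polyfun (params D)"
proof -
  have v: "(\<lambda>x. x None) \<in> polyfun (params D)" by (rule polyfun.var) (simp add: params_def)
  have "(\<lambda>x. jf V D \<theta> (fst c) (snd c) x) \<in> polyfun (params D)"
    unfolding jf_def
    by (intro polyfun.add polyfun.mult polyfun.const polyfun_sum assms polyfun_A v
          polyfun_diff)
  moreover have "jac V D \<theta> c = (\<lambda>x. jf V D \<theta> (fst c) (snd c) x)" by (rule ext) (rule jac_eq)
  ultimately show ?thesis by simp
qed


lemma finite_cols: "finite V \<Longrightarrow> finite (cols V)"
  by (rule finite_subset[of _ "V \<times> V"]) (auto simp: cols_def)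

lemma finite_params: "finite D \<Longrightarrow> finite (params D)"
  by (simp add: params_def)

lemma card_params: "finite D \<Longrightarrow> card (params D) = card D + 1"
  by (simp add: params_def card_image)

lemma digraph_finite: "digraph V D \<Longrightarrow> finite V \<and> finite D"
  unfolding digraph_def by (auto intro: finite_subset[of D "V \<times> V"])

lemma not_indep_rows:
  assumes fin: "finite V" "finite D" and C: "C \<subseteq> cols V" and R: "R \<subseteq> params D"
    and z: "\<And>\<theta> c x. \<theta> \<in> params D - R \<Longrightarrow> c \<in> C \<Longrightarrow> jac V D \<theta> c x = 0"
    and card: "card R < card C"
  shows "\<not> jac_indep V D C"
proof -
  have fC: "finite C" using C finite_cols[OF fin(1)] finite_subset by blast
  have fR: "finite R" using R finite_params[OF fin(2)] finite_subset by blast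
  obtain p where p: "\<forall>c\<in>C. p c \<in> polyfun (params D)" "\<exists>c\<in>C. \<exists>x. p c x \<noteq> 0"
      "\<forall>\<rho>\<in>R. \<forall>x. (\<Sum>c\<in>C. p c x * jac V D \<rho> c x) = 0"
    using dep_exists[OF fR fC card, of "jac V D" "params D"] polyfun_jac[OF fin(1)] by blast
  have "\<forall>\<theta>\<in>params D. \<forall>x. (\<Sum>c\<in>C. p c x * jac V D \<theta> c x) = 0"
  proof (intro ballI allI)
    fix \<theta> x assume "\<theta> \<in> params D"
    show "(\<Sum>c\<in>C. p c x * jac V D \<theta> c x) = 0"
    proof (cases "\<theta> \<in> R")
      case True then show ?thesis using p(3) by auto
    next
      case False then show ?thesis using z \<open>\<theta> \<in> params D\<close> by (auto intro!: sum.neutral)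
    qed
  qed
  then show ?thesis unfolding jac_indep_def using p(1,2) by blast
qed

lemma indep_point:
  assumes fin: "finite V" and C: "C \<subseteq> cols V" and R: "R \<subseteq> params D"
    and pt: "\<And>a. (\<forall>\<rho>\<in>R. (\<Sum>c\<in>C. a c * jac V D \<rho> c x0) = 0) \<Longrightarrow> \<forall>c\<in>C. a c = 0"
  shows "jac_indep V D C"
  unfolding jac_indep_def
proof
  assume "\<exists>p. (\<forall>c\<in>C. p c \<in> polyfun (params D)) \<and> (\<exists>c\<in>C. \<exists>x. p c x \<noteq> 0) \<and>
          (\<forall>\<theta>\<in>params D. \<forall>x. (\<Sum>c\<in>C. p c x * jac V D \<theta> c x) = 0)"
  then obtain p where p: "\<forall>c\<in>C. p c \<in> polyfun (params D)" "\<exists>c\<in>C. \<exists>x. p c x \<noteq> 0"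
     "\<forall>\<theta>\<in>params D. \<forall>x. (\<Sum>c\<in>C. p c x * jac V D \<theta> c x) = 0" by blast
  have fC: "finite C" using C finite_cols[OF fin(1)] finite_subset by blast
  have "\<forall>c\<in>C. \<forall>x. p c x = 0"
    using indep_from_point[OF fC, of R "jac V D" "params D" x0 p] polyfun_jac[OF fin] pt p(1,3) R
    by blast
  then show False using p(2) by blast
qed

lemma UB:
  assumes sd: "simple_digraph V D" and C: "C \<subseteq> cols V"
    and nk: "\<forall>c\<in>C. fst c \<noteq> k \<and> snd c \<noteq> k"
    and card: "card D - card (ch D k) + 1 < card C"
  shows "\<not> jac_indep V D C"
proof -
  have dg: "digraph V D" using sd simple_digraph_def by blast
  have fin: "finite V" "finite D" using digraph_finite[OF dg] by auto
  define Ok where "Ok = (\<lambda>b. (k, b)) ` ch D k"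
  have OkD: "Ok \<subseteq> D" unfolding Ok_def ch_def by auto
  have fOk: "finite Ok" using OkD fin finite_subset by blast
  have cOk: "card Ok = card (ch D k)" unfolding Ok_def by (rule card_image) (auto simp: inj_on_def)
  define R where "R = params D - Some ` Ok"
  have R: "R \<subseteq> params D" unfolding R_def by auto
  have "card R = card (params D) - card (Some ` Ok)"
    unfolding R_def using OkD fOk by (intro card_Diff_subset) (auto simp: params_def)
  also have "card (Some ` Ok) = card Ok" by (rule card_image) auto
  finally have cR: "card R = card D + 1 - card (ch D k)" using card_params[OF fin(2)] cOk by simp
  have "card Ok \<le> card D" using OkD fin card_mono by blast
  hence cR': "card R < card C" using cR cOk card by simp
  show ?thesis
  proof (rule not_indep_rows[OF fin C R _ cR'])
    fix \<theta> c x assume \<theta>: "\<theta> \<in> params D - R" and c: "c \<in> C"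
    then obtain b where b: "\<theta> = Some (k, b)" "(k, b) \<in> D" unfolding R_def Ok_def ch_def by auto
    have "b \<in> V" using b dg unfolding digraph_def by auto
    then show "jac V D \<theta> c x = 0" using jac_Some[OF fin(1) b(2)] b(1) nk c by auto
  qed
qed

lemma TB:
  assumes sd: "simple_digraph V D" and C: "C \<subseteq> cols V"
    and card: "card D + 1 < card C"
  shows "\<not> jac_indep V D C"
proof -
  have dg: "digraph V D" using sd simple_digraph_def by blast
  have fin: "finite V" "finite D" using digraph_finite[OF dg] by auto
  show ?thesis
    by (rule not_indep_rows[OF fin C order.refl]) (use card in \<open>auto simp: card_params[OF fin(2)]\<close>)
qed

definition colE :: "'v::linorder \<times> 'v \<Rightarrow> 'v \<times> 'v" where
  "colE e = (min (fst e) (snd e), max (fst e) (snd e))"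

lemma J_edge_row:
  assumes fin: "finite V" and dg: "digraph V D" and e: "(p, q) \<in> D" and x1: "x0 None = 1"
    and lz: "\<And>r. Lam D x0 r q = 0" and c: "c \<in> cols V"
  shows "jac V D (Some (p, q)) c x0 = (if c = colE (p, q) then -1 else 0)"
proof -
  have q: "q \<in> V" "p \<noteq> q" using dg e unfolding digraph_def by auto
  have Aq: "A D x0 r q = (if r = q then 1 else 0)" for r using lz unfolding A_def by simp
  obtain i j where ij: "c = (i, j)" "i \<le> j" using c unfolding cols_def by auto
  show ?thesis using jac_Some[OF fin e q(1)] x1 Aq ij q(2) unfolding colE_def
    by (auto simp: min_def max_def)
qed


lemma colE_cols: "digraph V D \<Longrightarrow> e \<in> D \<Longrightarrow> colE e \<in> cols V"
proof -
  assume "digraph V D" "e \<in> D"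
  then obtain a b where "e = (a, b)" "a \<in> V" "b \<in> V" unfolding digraph_def by auto
  then show "colE e \<in> cols V" unfolding colE_def cols_def by (auto simp: min_def max_def)
qed

lemma colE_offdiag: "digraph V D \<Longrightarrow> e \<in> D \<Longrightarrow> fst (colE e) \<noteq> snd (colE e)"
  unfolding colE_def digraph_def by (cases e) (auto simp: min_def max_def)

lemma colE_eq: "colE (p, q) = colE (p', q') \<Longrightarrow> (p', q') = (p, q) \<or> (p', q') = (q, p)"
  unfolding colE_def by (auto simp: min_def max_def split: if_splits)

lemma colE_inj: "simple_digraph V D \<Longrightarrow> inj_on colE D"
  unfolding inj_on_def simple_digraph_def
  by (metis colE_eq surj_pair)

lemma sum_if_eq:
  assumes "finite C"
  shows "(\<Sum>c\<in>C. a c * (if c = c0 then t else 0)) = (if c0 \<in> C then a c0 * t else (0::real))"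
proof -
  have "(\<Sum>c\<in>C. a c * (if c = c0 then t else 0)) = (\<Sum>c\<in>C. if c = c0 then a c * t else 0)"
    by (rule sum.cong) auto
  also have "\<dots> = (if c0 \<in> C then a c0 * t else 0)" using assms by (simp add: sum.delta')
  finally show ?thesis .
qed

lemma TL:
  assumes sd: "simple_digraph V D" and v: "v \<in> V"
  shows "\<exists>C \<subseteq> cols V. card C = card D + 1 \<and> jac_indep V D C"
proof -
  have dg: "digraph V D" using sd simple_digraph_def by blast
  have fin: "finite V" "finite D" using digraph_finite[OF dg] by auto
  define C where "C = insert (v, v) (colE ` D)"
  define x0 :: "'a param \<Rightarrow> real" where "x0 = (\<lambda>\<theta>. if \<theta> = None then 1 else 0)"
  have "colE ` D \<subseteq> cols V" using colE_cols[OF dg] by blast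
  moreover have "(v, v) \<in> cols V" using v by (simp add: cols_def)
  ultimately have Cc: "C \<subseteq> cols V" unfolding C_def by blast
  have nd: "(v, v) \<notin> colE ` D"
  proof
    assume "(v, v) \<in> colE ` D"
    then obtain e where "e \<in> D" "colE e = (v, v)" by auto
    thus False using colE_offdiag[OF dg, of e] by simp
  qed
  have cC: "card C = card D + 1" unfolding C_def using nd fin card_image[OF colE_inj[OF sd]] by simp
  have fC: "finite C" unfolding C_def using fin by simp
  have lz: "Lam D x0 r q = 0" for r q unfolding Lam_def x0_def by simp
  have x1: "x0 None = 1" by (simp add: x0_def)
  have "jac_indep V D C"
  proof (rule indep_point[OF fin(1) Cc order.refl])
    fix a assume h: "\<forall>\<rho>\<in>params D. (\<Sum>c\<in>C. a c * jac V D \<rho> c x0) = 0"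
    have ze: "a (colE e) = 0" if e: "e \<in> D" for e
    proof -
      obtain p q where pq: "e = (p, q)" by (cases e)
      have "Some (p, q) \<in> params D" using e pq by (simp add: params_def)
      hence "(\<Sum>c\<in>C. a c * jac V D (Some (p, q)) c x0) = 0" using h by blast
      moreover have "(\<Sum>c\<in>C. a c * jac V D (Some (p, q)) c x0) =
                     (\<Sum>c\<in>C. a c * (if c = colE (p, q) then -1 else 0))"
      proof (rule sum.cong[OF refl])
        fix c assume "c \<in> C"
        have "jac V D (Some (p, q)) c x0 = (if c = colE (p, q) then -1 else 0)"
          by (rule J_edge_row[OF fin(1) dg _ x1 lz]) (use e pq Cc \<open>c \<in> C\<close> in auto)
        thus "a c * jac V D (Some (p, q)) c x0 = a c * (if c = colE (p, q) then -1 else 0)" by simp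
      qed
      moreover have "colE (p, q) \<in> C" unfolding C_def using e pq by auto
      ultimately show ?thesis using sum_if_eq[OF fC] pq by simp
    qed
    have "(\<Sum>c\<in>C. a c * jac V D None c x0) = 0" using h by (auto simp: params_def)
    moreover have "(\<Sum>c\<in>C. a c * jac V D None c x0) = a (v, v) * jac V D None (v, v) x0"
    proof -
      have "(\<Sum>c\<in>colE ` D. a c * jac V D None c x0) = 0"
        by (rule sum.neutral) (use ze in auto)
      thus ?thesis unfolding C_def using nd fin by (subst sum.insert) auto
    qed
    moreover have "jac V D None (v, v) x0 = 1"
    proof -
      have "jac V D None (v, v) x0 = (\<Sum>k\<in>V. (if v = k then 1 else 0) * (if v = k then 1 else (0::real)))"
        unfolding jac_None A_def using lz by simp
      also have "\<dots> = (\<Sum>k\<in>V. if v = k then 1 else 0)" by (rule sum.cong) auto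
      also have "\<dots> = 1" using fin v by simp
      finally show ?thesis .
    qed
    ultimately have "a (v, v) = 0" by simp
    then show "\<forall>c\<in>C. a c = 0" using ze unfolding C_def by auto
  qed
  then show ?thesis using Cc cC by blast
qed


definition x0k :: "'v \<Rightarrow> 'v param \<Rightarrow> real" where
  "x0k k \<theta> = (case \<theta> of None \<Rightarrow> 1 | Some e \<Rightarrow> if snd e = k then 1 else 0)"

definition Dn :: "('v \<times> 'v) set \<Rightarrow> 'v \<Rightarrow> ('v \<times> 'v) set" where
  "Dn D k = {e \<in> D. fst e \<noteq> k \<and> snd e \<noteq> k}"

definition Pa :: "('v \<times> 'v) set \<Rightarrow> 'v \<Rightarrow> 'v set" where
  "Pa D k = {j. (j, k) \<in> D}"

lemma Lam_x0k: "Lam D (x0k k) r l = (if (r, l) \<in> D \<and> l = k then 1 else 0)"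
  unfolding Lam_def x0k_def by auto

lemma A_x0k: "A D (x0k k) r l = (if r = l then 1 else 0) - (if (r, l) \<in> D \<and> l = k then 1 else 0)"
  unfolding A_def Lam_x0k by simp

lemma F2:
  assumes fin: "finite V" and dg: "digraph V D" and e: "(p, q) \<in> Dn D k" and c: "c \<in> cols V"
  shows "jac V D (Some (p, q)) c (x0k k) = (if c = colE (p, q) then -1 else 0)"
  using e by (intro J_edge_row[OF fin dg _ _ _ c]) (auto simp: Dn_def x0k_def Lam_x0k)

lemma F3:
  assumes fin: "finite V" and dg: "digraph V D" and j: "(j, k) \<in> D"
    and c: "fst c \<noteq> k" "snd c \<noteq> k"
  shows "jac V D (Some (j, k)) c (x0k k) =
     (if fst c = j \<and> (snd c, k) \<in> D then 1 else 0) + (if snd c = j \<and> (fst c, k) \<in> D then 1 else 0)"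
proof -
  have kV: "k \<in> V" using dg j unfolding digraph_def by auto
  show ?thesis using jac_Some[OF fin j kV, of c "x0k k"] c unfolding A_x0k
    by (simp add: x0k_def)
qed

lemma F4:
  assumes fin: "finite V" and dg: "digraph V D" and r: "r \<in> V" "r \<noteq> k" and s: "s \<in> V" "s \<noteq> k"
    and kV: "k \<in> V"
  shows "jac V D None (r, s) (x0k k) =
     (if r = s then 1 else 0) + (if (r, k) \<in> D \<and> (s, k) \<in> D then 1 else 0)"
proof -
  have "jac V D None (r, s) (x0k k) = (\<Sum>l\<in>V. A D (x0k k) r l * A D (x0k k) s l)"
    by (simp add: jac_None)
  also have "\<dots> = (\<Sum>l\<in>V. (if l = r \<and> r = s then 1 else 0)
                 + (if l = k then (if (r, k) \<in> D \<and> (s, k) \<in> D then 1 else 0) else 0))"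
    by (rule sum.cong[OF refl]) (use r s in \<open>auto simp: A_x0k\<close>)
  also have "\<dots> = (\<Sum>l\<in>V. (if l = r \<and> r = s then 1 else 0))
                 + (\<Sum>l\<in>V. (if l = k then (if (r, k) \<in> D \<and> (s, k) \<in> D then 1 else 0) else 0))"
    by (rule sum.distrib)
  also have "(\<Sum>l\<in>V. (if l = r \<and> r = s then 1 else 0)) = (if r = s then 1 else (0::real))"
    using fin r by (cases "r = s") auto
  also have "(\<Sum>l\<in>V. (if l = k then (if (r, k) \<in> D \<and> (s, k) \<in> D then 1 else 0) else 0))
       = (if (r, k) \<in> D \<and> (s, k) \<in> D then 1 else (0::real))"
    using fin kV by (simp add: sum.delta)
  finally show ?thesis .
qed


lemma card_D_split:
  assumes dg: "digraph V D"
  shows "card D = card (Dn D k) + card (Pa D k) + card (ch D k)"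
proof -
  have fin: "finite V" "finite D" using digraph_finite[OF dg] by auto
  have D: "D = Dn D k \<union> (\<lambda>j. (j, k)) ` Pa D k \<union> (\<lambda>b. (k, b)) ` ch D k"
    unfolding Dn_def Pa_def ch_def by auto
  have f1: "finite (Dn D k)" "finite ((\<lambda>j. (j, k)) ` Pa D k)" "finite ((\<lambda>b. (k, b)) ` ch D k)"
    using fin finite_subset D by (metis Un_upper1 Un_upper2 infinite_super)+
  have noloop: "(k, k) \<notin> D" using dg digraph_def by blast
  have "card D = card (Dn D k \<union> (\<lambda>j. (j, k)) ` Pa D k) + card ((\<lambda>b. (k, b)) ` ch D k)"
    apply (subst D, rule card_Un_disjoint)
    using f1 noloop by (auto simp: Dn_def Pa_def ch_def)
  also have "card (Dn D k \<union> (\<lambda>j. (j, k)) ` Pa D k) = card (Dn D k) + card ((\<lambda>j. (j, k)) ` Pa D k)"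
    by (rule card_Un_disjoint) (use f1 in \<open>auto simp: Dn_def Pa_def\<close>)
  also have "card ((\<lambda>j. (j, k)) ` Pa D k) = card (Pa D k)" by (rule card_image) (auto simp: inj_on_def)
  also have "card ((\<lambda>b. (k, b)) ` ch D k) = card (ch D k)" by (rule card_image) (auto simp: inj_on_def)
  finally show ?thesis .
qed

lemma LL_core:
  assumes sd: "simple_digraph V D" and kV: "k \<in> V"
    and exc: "ex \<in> cols V" and exk: "fst ex \<noteq> k" "snd ex \<noteq> k"
    and ex1: "ex \<notin> colE ` Dn D k" and ex2: "ex \<notin> (\<lambda>j. (j, j)) ` Pa D k"
    and H: "\<And>a. (\<forall>j\<in>Pa D k. a ex * jac V D (Some (j, k)) ex (x0k k)
                 + (\<Sum>j'\<in>Pa D k. a (j', j') * jac V D (Some (j, k)) (j', j') (x0k k)) = 0) \<Longrightarrow>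
               a ex * jac V D None ex (x0k k)
                 + (\<Sum>j'\<in>Pa D k. a (j', j') * jac V D None (j', j') (x0k k)) = 0 \<Longrightarrow>
               a ex = 0 \<and> (\<forall>j\<in>Pa D k. a (j, j) = 0)"
  shows "\<exists>C \<subseteq> cols V. (\<forall>c\<in>C. fst c \<noteq> k \<and> snd c \<noteq> k) \<and>
            card C = card D - card (ch D k) + 1 \<and> jac_indep V D C"
proof -
  have dg: "digraph V D" using sd simple_digraph_def by blast
  have fin: "finite V" "finite D" using digraph_finite[OF dg] by auto
  define U where "U = colE ` Dn D k"
  define W where "W = (\<lambda>j. (j, j)) ` Pa D k"
  define C where "C = insert ex (U \<union> W)"
  have DnD: "Dn D k \<subseteq> D" unfolding Dn_def by auto
  have PaV: "Pa D k \<subseteq> V" using dg unfolding Pa_def digraph_def by auto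
  have fPa: "finite (Pa D k)" using PaV fin finite_subset by blast
  have fDn: "finite (Dn D k)" using DnD fin finite_subset by blast
  have fU: "finite U" "finite W" unfolding U_def W_def using fPa fDn by auto
  have fC: "finite C" unfolding C_def using fU by auto
  have Uc: "U \<subseteq> cols V" unfolding U_def using colE_cols[OF dg] DnD by blast
  have Wc: "W \<subseteq> cols V" unfolding W_def cols_def using PaV by auto
  have Cc: "C \<subseteq> cols V" unfolding C_def using Uc Wc exc by auto
  have Ck: "\<forall>c\<in>C. fst c \<noteq> k \<and> snd c \<noteq> k"
  proof
    fix c assume "c \<in> C"
    moreover have "fst c \<noteq> k \<and> snd c \<noteq> k" if "c \<in> U"
      using that unfolding U_def Dn_def colE_def by (auto simp: min_def max_def split: if_splits)
    moreover have "fst c \<noteq> k \<and> snd c \<noteq> k" if "c \<in> W"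
      using that dg unfolding W_def Pa_def digraph_def by auto
    ultimately show "fst c \<noteq> k \<and> snd c \<noteq> k" using exk unfolding C_def by blast
  qed
  have UW: "U \<inter> W = {}"
  proof (rule ccontr)
    assume "U \<inter> W \<noteq> {}"
    then obtain e j where "e \<in> Dn D k" "colE e = (j, j)" unfolding U_def W_def by (metis (no_types, lifting) disjoint_iff imageE)
    thus False using colE_offdiag[OF dg, of e] DnD by auto
  qed
  have cU: "card U = card (Dn D k)" unfolding U_def
    by (rule card_image) (rule inj_on_subset[OF colE_inj[OF sd] DnD])
  have cW: "card W = card (Pa D k)" unfolding W_def by (rule card_image) (auto simp: inj_on_def)
  have exUW: "ex \<notin> U \<union> W" using ex1 ex2 unfolding U_def W_def by blast
  have "card C = card (Dn D k) + card (Pa D k) + 1"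
    unfolding C_def using exUW fU UW cU cW by (simp add: card_Un_disjoint)
  hence cC: "card C = card D - card (ch D k) + 1" using card_D_split[OF dg, of k] by simp
  have "jac_indep V D C"
  proof (rule indep_point[OF fin(1) Cc order.refl])
    fix a assume h: "\<forall>\<rho>\<in>params D. (\<Sum>c\<in>C. a c * jac V D \<rho> c (x0k k)) = 0"
    have ze: "a (colE e) = 0" if e: "e \<in> Dn D k" for e
    proof -
      obtain p q where pq: "e = (p, q)" by (cases e)
      have "Some (p, q) \<in> params D" using e pq DnD by (auto simp: params_def)
      hence "(\<Sum>c\<in>C. a c * jac V D (Some (p, q)) c (x0k k)) = 0" using h by blast
      moreover have "(\<Sum>c\<in>C. a c * jac V D (Some (p, q)) c (x0k k)) =
                     (\<Sum>c\<in>C. a c * (if c = colE (p, q) then -1 else 0))"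
      proof (rule sum.cong[OF refl])
        fix c assume "c \<in> C"
        have "jac V D (Some (p, q)) c (x0k k) = (if c = colE (p, q) then -1 else 0)"
          by (rule F2[OF fin(1) dg]) (use e pq Cc \<open>c \<in> C\<close> in auto)
        thus "a c * jac V D (Some (p, q)) c (x0k k) = a c * (if c = colE (p, q) then -1 else 0)" by simp
      qed
      moreover have "colE (p, q) \<in> C" unfolding C_def U_def using e pq by auto
      ultimately show ?thesis using sum_if_eq[OF fC] pq by simp
    qed
    have red: "(\<Sum>c\<in>C. a c * jac V D \<rho> c (x0k k)) =
        a ex * jac V D \<rho> ex (x0k k) + (\<Sum>j\<in>Pa D k. a (j, j) * jac V D \<rho> (j, j) (x0k k))" for \<rho>
    proof -
      have "(\<Sum>c\<in>C. a c * jac V D \<rho> c (x0k k)) = a ex * jac V D \<rho> ex (x0k k)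
          + ((\<Sum>c\<in>U. a c * jac V D \<rho> c (x0k k)) + (\<Sum>c\<in>W. a c * jac V D \<rho> c (x0k k)))"
        unfolding C_def using exUW fU UW by (simp add: sum.union_disjoint)
      also have "(\<Sum>c\<in>U. a c * jac V D \<rho> c (x0k k)) = 0"
        unfolding U_def by (rule sum.neutral) (use ze in auto)
      also have "(\<Sum>c\<in>W. a c * jac V D \<rho> c (x0k k)) = (\<Sum>j\<in>Pa D k. a (j, j) * jac V D \<rho> (j, j) (x0k k))"
        unfolding W_def by (subst sum.reindex) (auto simp: inj_on_def)
      finally show ?thesis by simp
    qed
    have r1: "\<forall>j\<in>Pa D k. a ex * jac V D (Some (j, k)) ex (x0k k)
                 + (\<Sum>j'\<in>Pa D k. a (j', j') * jac V D (Some (j, k)) (j', j') (x0k k)) = 0"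
    proof
      fix j assume "j \<in> Pa D k"
      hence "Some (j, k) \<in> params D" unfolding Pa_def params_def by auto
      thus "a ex * jac V D (Some (j, k)) ex (x0k k)
                 + (\<Sum>j'\<in>Pa D k. a (j', j') * jac V D (Some (j, k)) (j', j') (x0k k)) = 0"
        using h red by metis
    qed
    have r2: "a ex * jac V D None ex (x0k k)
                 + (\<Sum>j'\<in>Pa D k. a (j', j') * jac V D None (j', j') (x0k k)) = 0"
      using h red[of None] by (auto simp: params_def)
    have "a ex = 0 \<and> (\<forall>j\<in>Pa D k. a (j, j) = 0)" by (rule H[OF r1 r2])
    then show "\<forall>c\<in>C. a c = 0" using ze unfolding C_def U_def W_def by auto
  qed
  then show ?thesis using Cc Ck cC by blast
qed


lemma sum_if_eq2:
  assumes "finite S" "j \<in> S"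
  shows "(\<Sum>j'\<in>S. a j' * (if j' = j then t else 0)) = a j * (t::real)"
  using sum_if_eq[OF assms(1), of a j t] assms(2) by simp

lemma LL:
  assumes sd: "simple_digraph V D" and kV: "k \<in> V"
    and app: "ch D k \<noteq> {} \<or> \<not> complete_digraph V D"
  shows "\<exists>C \<subseteq> cols V. (\<forall>c\<in>C. fst c \<noteq> k \<and> snd c \<noteq> k) \<and>
            card C = card D - card (ch D k) + 1 \<and> jac_indep V D C"
proof -
  have dg: "digraph V D" using sd simple_digraph_def by blast
  have fin: "finite V" "finite D" using digraph_finite[OF dg] by auto
  have PaV: "Pa D k \<subseteq> V" using dg unfolding Pa_def digraph_def by auto
  have fPa: "finite (Pa D k)" using PaV fin finite_subset by blast
  have Pak: "j \<noteq> k" if "j \<in> Pa D k" for j using that dg unfolding Pa_def digraph_def by auto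
  have diagJ: "jac V D (Some (j, k)) (j', j') (x0k k) = (if j' = j then 2 else 0)"
    if "j \<in> Pa D k" "j' \<in> Pa D k" for j j'
    using F3[OF fin(1) dg, of j k "(j', j')"] that Pak unfolding Pa_def by auto
  have diagN: "jac V D None (j', j') (x0k k) = 2" if "j' \<in> Pa D k" for j'
    using F4[OF fin(1) dg, of j' k j'] that Pak PaV kV unfolding Pa_def by auto
  show ?thesis
  proof (cases "\<exists>m\<in>V. m \<noteq> k \<and> (m, k) \<notin> D")
    case True
    then obtain m where m: "m \<in> V" "m \<noteq> k" "(m, k) \<notin> D" by blast
    have mPa: "m \<notin> Pa D k" using m unfolding Pa_def by auto
    show ?thesis
    proof (rule LL_core[OF sd kV, of "(m, m)"])
      show "(m, m) \<in> cols V" using m by (simp add: cols_def)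
      show "fst (m, m) \<noteq> k" "snd (m, m) \<noteq> k" using m by auto
      show "(m, m) \<notin> colE ` Dn D k"
      proof
        assume "(m, m) \<in> colE ` Dn D k"
        then obtain e where "e \<in> Dn D k" "colE e = (m, m)" by auto
        thus False using colE_offdiag[OF dg, of e] unfolding Dn_def by auto
      qed
      show "(m, m) \<notin> (\<lambda>j. (j, j)) ` Pa D k" using mPa by auto
    next
      fix a
      assume r1: "\<forall>j\<in>Pa D k. a (m, m) * jac V D (Some (j, k)) (m, m) (x0k k)
                 + (\<Sum>j'\<in>Pa D k. a (j', j') * jac V D (Some (j, k)) (j', j') (x0k k)) = 0"
        and r2: "a (m, m) * jac V D None (m, m) (x0k k)
                 + (\<Sum>j'\<in>Pa D k. a (j', j') * jac V D None (j', j') (x0k k)) = 0"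
      have zj: "\<forall>j\<in>Pa D k. a (j, j) = 0"
      proof
        fix j assume j: "j \<in> Pa D k"
        have "jac V D (Some (j, k)) (m, m) (x0k k) = 0"
          using F3[OF fin(1) dg, of j k "(m, m)"] j m unfolding Pa_def by auto
        moreover have "(\<Sum>j'\<in>Pa D k. a (j', j') * jac V D (Some (j, k)) (j', j') (x0k k))
              = (\<Sum>j'\<in>Pa D k. a (j', j') * (if j' = j then 2 else 0))"
          by (rule sum.cong[OF refl]) (use diagJ j in auto)
        ultimately have "a (j, j) * 2 = 0" using r1[rule_format, OF j] sum_if_eq2[OF fPa j] by simp
        thus "a (j, j) = 0" by simp
      qed
      have "jac V D None (m, m) (x0k k) = 1" using F4[OF fin(1) dg m(1,2) m(1,2) kV] m by simp
      moreover have "(\<Sum>j'\<in>Pa D k. a (j', j') * jac V D None (j', j') (x0k k)) = 0"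
        using zj by simp
      ultimately have "a (m, m) = 0" using r2 by simp
      thus "a (m, m) = 0 \<and> (\<forall>j\<in>Pa D k. a (j, j) = 0)" using zj by simp
    qed
  next
    case False
    hence allpa: "\<And>m. m \<in> V \<Longrightarrow> m \<noteq> k \<Longrightarrow> (m, k) \<in> D" by blast
    have "ch D k = {}"
    proof (rule ccontr)
      assume "ch D k \<noteq> {}"
      then obtain b where b: "(k, b) \<in> D" unfolding ch_def by auto
      hence "b \<in> V" "b \<noteq> k" using dg unfolding digraph_def by auto
      hence "(b, k) \<in> D" using allpa by blast
      thus False using b sd unfolding simple_digraph_def by blast
    qed
    hence "\<not> complete_digraph V D" using app by simp
    then obtain p0 q0 where pq0: "p0 \<in> V" "q0 \<in> V" "p0 \<noteq> q0" "(p0, q0) \<notin> D" "(q0, p0) \<notin> D"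
      unfolding complete_digraph_def by blast
    define p where "p = min p0 q0"
    define q where "q = max p0 q0"
    have pq: "p \<in> V" "q \<in> V" "p < q" "(p, q) \<notin> D" "(q, p) \<notin> D"
      using pq0 unfolding p_def q_def by (auto simp: min_def max_def)
    have pk: "p \<noteq> k" "q \<noteq> k" using pq allpa by force+
    have pPa: "p \<in> Pa D k" "q \<in> Pa D k" using pq pk allpa unfolding Pa_def by auto
    show ?thesis
    proof (rule LL_core[OF sd kV, of "(p, q)"])
      show "(p, q) \<in> cols V" using pq by (simp add: cols_def)
      show "fst (p, q) \<noteq> k" "snd (p, q) \<noteq> k" using pk by auto
      show "(p, q) \<notin> colE ` Dn D k"
      proof
        assume "(p, q) \<in> colE ` Dn D k"
        then obtain a b where "(a, b) \<in> Dn D k" "colE (a, b) = (p, q)" by auto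
        moreover have "colE (p, q) = (p, q)" using pq unfolding colE_def by auto
        ultimately show False using colE_eq[of a b p q] pq unfolding Dn_def by auto
      qed
      show "(p, q) \<notin> (\<lambda>j. (j, j)) ` Pa D k" using pq by auto
    next
      fix a
      assume r1: "\<forall>j\<in>Pa D k. a (p, q) * jac V D (Some (j, k)) (p, q) (x0k k)
                 + (\<Sum>j'\<in>Pa D k. a (j', j') * jac V D (Some (j, k)) (j', j') (x0k k)) = 0"
        and r2: "a (p, q) * jac V D None (p, q) (x0k k)
                 + (\<Sum>j'\<in>Pa D k. a (j', j') * jac V D None (j', j') (x0k k)) = 0"
      have eqj: "a (p, q) * ((if p = j then 1 else 0) + (if q = j then 1 else 0)) + a (j, j) * 2 = 0"
        if j: "j \<in> Pa D k" for j
      proof -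
        have "jac V D (Some (j, k)) (p, q) (x0k k) = (if p = j then 1 else 0) + (if q = j then 1 else 0)"
          using F3[OF fin(1) dg, of j k "(p, q)"] j pk pPa unfolding Pa_def by auto
        moreover have "(\<Sum>j'\<in>Pa D k. a (j', j') * jac V D (Some (j, k)) (j', j') (x0k k))
              = (\<Sum>j'\<in>Pa D k. a (j', j') * (if j' = j then 2 else 0))"
          by (rule sum.cong[OF refl]) (use diagJ j in auto)
        ultimately show ?thesis using r1[rule_format, OF j] sum_if_eq2[OF fPa j] by simp
      qed
      have z: "a (j, j) = 0" if "j \<in> Pa D k" "j \<noteq> p" "j \<noteq> q" for j
        using eqj[OF that(1)] that by simp
      have ep: "a (p, q) + a (p, p) * 2 = 0" using eqj[OF pPa(1)] pq by (simp split: if_splits)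
      have eq: "a (p, q) + a (q, q) * 2 = 0" using eqj[OF pPa(2)] pq by (simp split: if_splits)
      have "(\<Sum>j'\<in>Pa D k. a (j', j') * jac V D None (j', j') (x0k k))
          = (\<Sum>j'\<in>Pa D k. 2 * a (j', j'))"
        by (rule sum.cong[OF refl]) (use diagN in auto)
      also have "\<dots> = (\<Sum>j'\<in>{p, q}. 2 * a (j', j'))"
        by (rule sum.mono_neutral_right) (use fPa pPa z in auto)
      also have "\<dots> = 2 * a (p, p) + 2 * a (q, q)" using pq by simp
      finally have s: "(\<Sum>j'\<in>Pa D k. a (j', j') * jac V D None (j', j') (x0k k))
          = 2 * a (p, p) + 2 * a (q, q)" .
      have "jac V D None (p, q) (x0k k) = 1"
        using F4[OF fin(1) dg pq(1) pk(1) pq(2) pk(2) kV] pq pPa unfolding Pa_def by simp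
      hence "a (p, q) + 2 * a (p, p) + 2 * a (q, q) = 0" using r2 s by simp
      hence apq: "a (p, q) = 0" using ep eq by linarith
      hence "\<forall>j\<in>Pa D k. a (j, j) = 0" using z ep eq by auto
      thus "a (p, q) = 0 \<and> (\<forall>j\<in>Pa D k. a (j, j) = 0)" using apq by simp
    qed
  qed
qed


lemma card_sum_ch:
  assumes dg: "digraph V D"
  shows "card D = (\<Sum>k\<in>V. card (ch D k))"
proof -
  have fin: "finite V" "finite D" using digraph_finite[OF dg] by auto
  have "D = (SIGMA k:V. ch D k)" using dg unfolding digraph_def ch_def by auto
  moreover have "\<forall>k\<in>V. finite (ch D k)"
    using dg fin unfolding digraph_def ch_def by (auto intro: finite_subset[of _ V])
  ultimately show ?thesis using fin card_SigmaI[of V "ch D"] by metis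
qed

lemma ch_le: "digraph V D \<Longrightarrow> card (ch D k) \<le> card D"
  using card_D_split[of V D k] by simp

lemma eq_ch:
  assumes sd1: "simple_digraph V D1" and sd2: "simple_digraph V D2"
    and iff: "\<And>C. C \<subseteq> cols V \<Longrightarrow> jac_indep V D1 C \<longleftrightarrow> jac_indep V D2 C"
    and cd: "card D1 = card D2" and kV: "k \<in> V"
    and app1: "ch D1 k \<noteq> {} \<or> \<not> complete_digraph V D1"
    and app2: "ch D2 k \<noteq> {} \<or> \<not> complete_digraph V D2"
  shows "card (ch D1 k) = card (ch D2 k)"
proof -
  have dg1: "digraph V D1" using sd1 simple_digraph_def by blast
  have dg2: "digraph V D2" using sd2 simple_digraph_def by blast
  obtain C1 where C1: "C1 \<subseteq> cols V" "\<forall>c\<in>C1. fst c \<noteq> k \<and> snd c \<noteq> k"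
      "card C1 = card D1 - card (ch D1 k) + 1" "jac_indep V D1 C1"
    using LL[OF sd1 kV app1] by blast
  have "jac_indep V D2 C1" using iff C1 by blast
  hence a: "\<not> (card D2 - card (ch D2 k) + 1 < card C1)" using UB[OF sd2 C1(1,2)] by blast
  obtain C2 where C2: "C2 \<subseteq> cols V" "\<forall>c\<in>C2. fst c \<noteq> k \<and> snd c \<noteq> k"
      "card C2 = card D2 - card (ch D2 k) + 1" "jac_indep V D2 C2"
    using LL[OF sd2 kV app2] by blast
  have "jac_indep V D1 C2" using iff C2 by blast
  hence b: "\<not> (card D1 - card (ch D1 k) + 1 < card C2)" using UB[OF sd1 C2(1,2)] by blast
  show ?thesis using a b C1(3) C2(3) cd ch_le[OF dg1, of k] ch_le[OF dg2, of k] by linarith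
qed

theorem theorem4p5:
  fixes V :: "'v::linorder set" and D1 D2 :: "('v \<times> 'v) set"
  assumes "simple_digraph V D1" and "simple_digraph V D2"
    and "\<not> complete_digraph V D1 \<or> \<not> complete_digraph V D2"
    and "\<exists>i\<in>V. card (ch D1 i) \<noteq> card (ch D2 i)"
  shows "jacobian_matroid V D1 \<noteq> jacobian_matroid V D2"
proof
  assume M: "jacobian_matroid V D1 = jacobian_matroid V D2"
  have sd1: "simple_digraph V D1" and sd2: "simple_digraph V D2" using assms by auto
  have dg1: "digraph V D1" using sd1 simple_digraph_def by blast
  have dg2: "digraph V D2" using sd2 simple_digraph_def by blast
  have fin: "finite V" using dg1 digraph_def by blast
  have iff: "jac_indep V D1 C \<longleftrightarrow> jac_indep V D2 C" if "C \<subseteq> cols V" for C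
    using M that unfolding jacobian_matroid_def by (metis (mono_tags, lifting) mem_Collect_eq)
  obtain i where i: "i \<in> V" "card (ch D1 i) \<noteq> card (ch D2 i)" using assms(4) by blast
  have cd: "card D1 = card D2"
  proof (rule ccontr)
    assume "card D1 \<noteq> card D2"
    then consider "card D1 < card D2" | "card D2 < card D1" by linarith
    then show False
    proof cases
      case 1
      obtain C where "C \<subseteq> cols V" "card C = card D2 + 1" "jac_indep V D2 C" using TL[OF sd2 i(1)] by blast
      then show False using iff TB[OF sd1, of C] 1 by auto
    next
      case 2
      obtain C where "C \<subseteq> cols V" "card C = card D1 + 1" "jac_indep V D1 C" using TL[OF sd1 i(1)] by blast
      then show False using iff TB[OF sd2, of C] 2 by auto
    qed
  qed
  have sums: "(\<Sum>k\<in>V. card (ch D1 k)) = (\<Sum>k\<in>V. card (ch D2 k))"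
    using card_sum_ch[OF dg1] card_sum_ch[OF dg2] cd by simp
  have k1: "\<exists>k\<in>V. card (ch D2 k) < card (ch D1 k)"
  proof (rule ccontr)
    assume "\<not> ?thesis"
    hence le: "\<forall>k\<in>V. card (ch D1 k) \<le> card (ch D2 k)" by auto
    hence "\<exists>k\<in>V. card (ch D1 k) < card (ch D2 k)" using i by force
    hence "(\<Sum>k\<in>V. card (ch D1 k)) < (\<Sum>k\<in>V. card (ch D2 k))"
      using sum_strict_mono_ex1[OF fin le] by blast
    thus False using sums by simp
  qed
  have k2: "\<exists>k\<in>V. card (ch D1 k) < card (ch D2 k)"
  proof (rule ccontr)
    assume "\<not> ?thesis"
    hence le: "\<forall>k\<in>V. card (ch D2 k) \<le> card (ch D1 k)" by auto
    hence "\<exists>k\<in>V. card (ch D2 k) < card (ch D1 k)" using i by force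
    hence "(\<Sum>k\<in>V. card (ch D2 k)) < (\<Sum>k\<in>V. card (ch D1 k))"
      using sum_strict_mono_ex1[OF fin le] by blast
    thus False using sums by simp
  qed
  show False
  proof (cases "complete_digraph V D2")
    case False
    obtain k where k: "k \<in> V" "card (ch D2 k) < card (ch D1 k)" using k1 by blast
    hence "ch D1 k \<noteq> {}" by auto
    then show False using eq_ch[OF sd1 sd2 iff cd k(1)] False k by auto
  next
    case True
    hence nc: "\<not> complete_digraph V D1" using assms(3) by blast
    obtain k where k: "k \<in> V" "card (ch D1 k) < card (ch D2 k)" using k2 by blast
    hence "ch D2 k \<noteq> {}" by auto
    then show False using eq_ch[OF sd1 sd2 iff cd k(1)] nc k by auto
  qed
qed

end
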